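(* Let $X$ be a continuum and $K\subset X$ a subcontinuum. Suppose the quotient $X/K$ is coastal at the point $K$. Then there exists $y\in X-K$ such that $\kappa(K;y)$ is dense in $X$.
   Context: A continuum is a nondegenerate compact connected Hausdorff space. $X/K$ is the quotient of $X$ obtained by collapsing $K$ to a single point, also denoted $K$. For a subcontinuum $L$ of a continuum $Z$ and a point $p$, $\kappa(L;p)$ is the union of all subcontinua $M$ of $Z$ with $L\subset M$, $M\neq Z$, $p\notin M$. $Z$ is coastal at $z$ if $\kappa(\{z\};p)$ is dense in $Z$ for some $p\neq z$. *)

theory Defs
  imports "HOL-Analysis.Analysis"
begin

definition continuum :: "'a topology \<Rightarrow> bool" where
  "continuum X \<longleftrightarrow> compact_space X \<and> connected_space X \<and> Hausdorff_space X \<and>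
     (\<exists>a\<in>topspace X. \<exists>b\<in>topspace X. a \<noteq> b)"

definition subcontinuum :: "'a topology \<Rightarrow> 'a set \<Rightarrow> bool" where
  "subcontinuum X M \<longleftrightarrow> M \<subseteq> topspace X \<and> continuum (subtopology X M)"

definition kappa :: "'a topology \<Rightarrow> 'a set \<Rightarrow> 'a \<Rightarrow> 'a set" where
  "kappa Z L p = \<Union>{M. subcontinuum Z M \<and> L \<subseteq> M \<and> M \<noteq> topspace Z \<and> p \<notin> M}"

definition coastal_at :: "'a topology \<Rightarrow> 'a \<Rightarrow> bool" where
  "coastal_at Z z \<longleftrightarrow> z \<in> topspace Z \<and>
     (\<exists>p\<in>topspace Z. p \<noteq> z \<and> Z closure_of (kappa Z {z} p) = topspace Z)"

text \<open>Quotient X/K: points are K itself and the singletons {x}, x in X - K.\<close>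
definition collapse_map :: "'a set \<Rightarrow> 'a \<Rightarrow> 'a set" where
  "collapse_map K x = (if x \<in> K then K else {x})"

lemma istopology_collapse:
  "istopology (\<lambda>U. U \<subseteq> collapse_map K ` topspace X \<and>
      openin X {x \<in> topspace X. collapse_map K x \<in> U})"
proof -
  have i: "openin X {x \<in> topspace X. collapse_map K x \<in> S \<inter> T}"
    if "openin X {x \<in> topspace X. collapse_map K x \<in> S}"
       "openin X {x \<in> topspace X. collapse_map K x \<in> T}" for S T
  proof -
    have "{x \<in> topspace X. collapse_map K x \<in> S \<inter> T} =
       {x \<in> topspace X. collapse_map K x \<in> S} \<inter> {x \<in> topspace X. collapse_map K x \<in> T}"
      by blast
    then show ?thesis using that by (metis (no_types, lifting) openin_Int)
  qed
  have u: "openin X {x \<in> topspace X. collapse_map K x \<in> \<Union>\<K>}"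
    if "\<forall>U\<in>\<K>. openin X {x \<in> topspace X. collapse_map K x \<in> U}" for \<K>
  proof -
    have "{x \<in> topspace X. collapse_map K x \<in> \<Union>\<K>} =
       \<Union>((\<lambda>U. {x \<in> topspace X. collapse_map K x \<in> U}) ` \<K>)" by blast
    then show ?thesis using that by (metis (no_types, lifting) imageE openin_Union)
  qed
  show ?thesis unfolding istopology_def
    apply (rule conjI)
     apply (intro allI impI)
     apply (elim conjE, rule conjI, blast, rule i, assumption, assumption)
    apply (intro allI impI)
    apply (rule conjI)
     apply (simp add: Sup_le_iff)
    apply (rule u, blast)
    done
qed

definition collapse_topology :: "'a topology \<Rightarrow> 'a set \<Rightarrow> 'a set topology" where
  "collapse_topology X K = topology (\<lambda>U. U \<subseteq> collapse_map K ` topspace X \<and>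
      openin X {x \<in> topspace X. collapse_map K x \<in> U})"

lemma openin_collapse_topology:
  "openin (collapse_topology X K) U \<longleftrightarrow> U \<subseteq> collapse_map K ` topspace X \<and>
      openin X {x \<in> topspace X. collapse_map K x \<in> U}"
  unfolding collapse_topology_def by (simp only: topology_inverse'[OF istopology_collapse])

end

theory Submission
  imports Defs
begin

lemma topspace_collapse:
  "topspace (collapse_topology X K) = collapse_map K ` topspace X"
proof
  show "topspace (collapse_topology X K) \<subseteq> collapse_map K ` topspace X"
    using openin_collapse_topology[of X K "topspace (collapse_topology X K)"] by simp
  have "openin (collapse_topology X K) (collapse_map K ` topspace X)"
  proof -
    have "{x \<in> topspace X. collapse_map K x \<in> collapse_map K ` topspace X} = topspace X" by auto
    then show ?thesis unfolding openin_collapse_topology by auto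
  qed
  then show "collapse_map K ` topspace X \<subseteq> topspace (collapse_topology X K)"
    by (rule openin_subset)
qed

lemma preimage_saturated:
  assumes "S \<subseteq> topspace X" "K \<subseteq> S \<or> K \<inter> S = {}"
  shows "{x \<in> topspace X. collapse_map K x \<in> collapse_map K ` S} = S"
proof
  show "S \<subseteq> {x \<in> topspace X. collapse_map K x \<in> collapse_map K ` S}" using assms(1) by auto
  show "{x \<in> topspace X. collapse_map K x \<in> collapse_map K ` S} \<subseteq> S"
  proof
    fix x assume "x \<in> {x \<in> topspace X. collapse_map K x \<in> collapse_map K ` S}"
    then obtain s where s: "s \<in> S" "collapse_map K x = collapse_map K s" by auto
    show "x \<in> S"
    proof (cases "x \<in> K")
      case True
      then show ?thesis using assms(2) s by (auto simp: collapse_map_def split: if_splits)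
    next
      case False
      then show ?thesis using s by (auto simp: collapse_map_def split: if_splits)
    qed
  qed
qed

lemma openin_collapse_sat:
  assumes "openin X S" "K \<subseteq> S \<or> K \<inter> S = {}"
  shows "openin (collapse_topology X K) (collapse_map K ` S)"
  unfolding openin_collapse_topology
  using preimage_saturated[OF openin_subset[OF assms(1)] assms(2)] assms openin_subset[OF assms(1)]
  by auto

lemma closedin_collapse:
  "closedin (collapse_topology X K) F \<longleftrightarrow> F \<subseteq> topspace (collapse_topology X K) \<and>
     closedin X {x \<in> topspace X. collapse_map K x \<in> F}"
proof -
  have e: "{x \<in> topspace X. collapse_map K x \<in> topspace (collapse_topology X K) - F}
       = topspace X - {x \<in> topspace X. collapse_map K x \<in> F}"
    by (auto simp: topspace_collapse)
  show ?thesis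
    unfolding closedin_def[of "collapse_topology X K"] openin_collapse_topology e
    by (auto simp: closedin_def topspace_collapse)
qed

lemma Hausdorff_collapse:
  assumes "Hausdorff_space X" "compactin X K"
  shows "Hausdorff_space (collapse_topology X K)"
  unfolding Hausdorff_space_def[of "collapse_topology X K"]
proof (intro allI impI)
  fix u v
  assume uv: "u \<in> topspace (collapse_topology X K) \<and> v \<in> topspace (collapse_topology X K) \<and> u \<noteq> v"
  have Kc: "closedin X K" using assms compactin_imp_closedin by blast
  have sep: "\<exists>U V. openin (collapse_topology X K) U \<and> openin (collapse_topology X K) V \<and>
       collapse_map K a \<in> U \<and> collapse_map K b \<in> V \<and> disjnt U V"
    if ab: "a \<in> topspace X" "b \<in> topspace X" "b \<notin> K" "collapse_map K a \<noteq> collapse_map K b" for a b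
  proof (cases "a \<in> K")
    case True
    have "compactin X {b}" using ab by simp
    moreover have "disjnt K {b}" using ab by simp
    ultimately obtain U V where UV: "openin X U" "openin X V" "K \<subseteq> U" "{b} \<subseteq> V" "disjnt U V"
      using Hausdorff_space_compact_separation[OF assms(1) assms(2)] by metis
    have V': "openin X (V - K)" using UV Kc by auto
    show ?thesis
    proof (intro exI conjI)
      show "openin (collapse_topology X K) (collapse_map K ` U)"
        using openin_collapse_sat UV by blast
      show "openin (collapse_topology X K) (collapse_map K ` (V - K))"
        using openin_collapse_sat[OF V'] by blast
      show "collapse_map K a \<in> collapse_map K ` U" using True UV by auto
      show "collapse_map K b \<in> collapse_map K ` (V - K)" using UV ab by auto
      show "disjnt (collapse_map K ` U) (collapse_map K ` (V - K))"
        using UV unfolding disjnt_def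
        by (auto simp: collapse_map_def split: if_splits)
    qed
  next
    case False
    have "a \<noteq> b" using ab by auto
    then obtain U V where UV: "openin X U" "openin X V" "a \<in> U" "b \<in> V" "disjnt U V"
      using assms(1) ab unfolding Hausdorff_space_def by blast
    have U': "openin X (U - K)" and V': "openin X (V - K)" using UV Kc by auto
    show ?thesis
    proof (intro exI conjI)
      show "openin (collapse_topology X K) (collapse_map K ` (U - K))"
        using openin_collapse_sat[OF U'] by blast
      show "openin (collapse_topology X K) (collapse_map K ` (V - K))"
        using openin_collapse_sat[OF V'] by blast
      show "collapse_map K a \<in> collapse_map K ` (U - K)" using UV False by auto
      show "collapse_map K b \<in> collapse_map K ` (V - K)" using UV ab by auto
      show "disjnt (collapse_map K ` (U - K)) (collapse_map K ` (V - K))"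
        using UV unfolding disjnt_def
        by (auto simp: collapse_map_def split: if_splits)
    qed
  qed
  obtain a b where ab: "a \<in> topspace X" "b \<in> topspace X" "u = collapse_map K a" "v = collapse_map K b"
    using uv by (auto simp: topspace_collapse)
  show "\<exists>U V. openin (collapse_topology X K) U \<and> openin (collapse_topology X K) V \<and>
       u \<in> U \<and> v \<in> V \<and> disjnt U V"
  proof (cases "b \<in> K")
    case False
    then show ?thesis using sep ab uv by blast
  next
    case True
    then have "a \<notin> K" using uv ab by (auto simp: collapse_map_def)
    then obtain U V where "openin (collapse_topology X K) U" "openin (collapse_topology X K) V"
       "v \<in> U" "u \<in> V" "disjnt U V" using sep[of b a] ab uv by metis
    then show ?thesis by (meson disjnt_sym)
  qed
qed



lemma preimage_subcontinuum:
  assumes X: "continuum X" and K: "subcontinuum X K"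
    and M: "subcontinuum (collapse_topology X K) M" and KM: "K \<in> M"
  shows "subcontinuum X {x \<in> topspace X. collapse_map K x \<in> M}"
proof -
  define Q where "Q = collapse_topology X K"
  define P where "P = {x \<in> topspace X. collapse_map K x \<in> M}"
  have HX: "Hausdorff_space X" and CX: "compact_space X" using X by (auto simp: continuum_def)
  have Ksub: "K \<subseteq> topspace X" using K by (simp add: subcontinuum_def)
  have Kc: "compactin X K" using K by (simp add: subcontinuum_def continuum_def compactin_subspace)
  have Kconn: "connectedin X K" using K by (simp add: subcontinuum_def continuum_def connectedin_def)
  have HQ: "Hausdorff_space Q" unfolding Q_def using Hausdorff_collapse HX Kc by blast
  have Msub: "M \<subseteq> topspace Q" using M by (simp add: subcontinuum_def Q_def)
  have Mc: "compactin Q M" using M unfolding Q_def by (simp add: subcontinuum_def continuum_def compactin_subspace)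
  have Mconn: "connectedin Q M" using M unfolding Q_def by (simp add: subcontinuum_def continuum_def connectedin_def)
  have "closedin Q M" using HQ Mc compactin_imp_closedin by blast
  then have Pcl: "closedin X P" unfolding Q_def P_def closedin_collapse by blast
  then have Pc: "compactin X P" using CX closedin_compact_space by blast
  have Psub: "P \<subseteq> topspace X" unfolding P_def by auto
  have KP: "K \<subseteq> P" unfolding P_def using Ksub KM by (auto simp: collapse_map_def)
  obtain a b where ab: "a \<in> K" "b \<in> K" "a \<noteq> b"
    using K by (auto simp: subcontinuum_def continuum_def)
  have claim: False if E: "closedin X E1" "closedin X E2" "P \<subseteq> E1 \<union> E2" "E1 \<inter> E2 \<inter> P = {}"
      "E1 \<inter> P \<noteq> {}" "E2 \<inter> P \<noteq> {}" "K \<inter> E2 = {}" for E1 E2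
  proof -
    define A where "A = E1 \<inter> P"
    define B where "B = E2 \<inter> P"
    have KA: "K \<subseteq> A" using KP E unfolding A_def by blast
    have KB: "K \<inter> B = {}" using E unfolding B_def by blast
    have pA: "{x \<in> topspace X. collapse_map K x \<in> collapse_map K ` A} = A"
      by (rule preimage_saturated) (use Psub KA in \<open>auto simp: A_def\<close>)
    have pB: "{x \<in> topspace X. collapse_map K x \<in> collapse_map K ` B} = B"
      by (rule preimage_saturated) (use Psub KB in \<open>auto simp: B_def\<close>)
    have Acl: "closedin X A" unfolding A_def using E Pcl by blast
    have Bcl: "closedin X B" unfolding B_def using E Pcl by blast
    have F1: "closedin Q (collapse_map K ` A)"
      unfolding Q_def closedin_collapse pA using Acl Psub
      by (auto simp: topspace_collapse A_def)
    have F2: "closedin Q (collapse_map K ` B)"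
      unfolding Q_def closedin_collapse pB using Bcl Psub
      by (auto simp: topspace_collapse B_def)
    have c1: "M \<subseteq> collapse_map K ` A \<union> collapse_map K ` B"
    proof
      fix m assume m: "m \<in> M"
      then obtain x where x: "x \<in> topspace X" "m = collapse_map K x"
        using Msub unfolding Q_def topspace_collapse by auto
      then have "x \<in> P" using m unfolding P_def by auto
      then show "m \<in> collapse_map K ` A \<union> collapse_map K ` B"
        using x E unfolding A_def B_def by blast
    qed
    have c2: "collapse_map K ` A \<inter> collapse_map K ` B \<inter> M = {}"
    proof (rule ccontr)
      assume "collapse_map K ` A \<inter> collapse_map K ` B \<inter> M \<noteq> {}"
      then obtain u v where uv: "u \<in> A" "v \<in> B" "collapse_map K u = collapse_map K v" by auto
      then have "v \<in> {x \<in> topspace X. collapse_map K x \<in> collapse_map K ` A}"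
        using Psub unfolding B_def by auto
      then have "v \<in> A" using pA by simp
      then show False using uv E unfolding A_def B_def by blast
    qed
    have c3: "collapse_map K ` A \<inter> M \<noteq> {}" using E unfolding A_def P_def by blast
    have c4: "collapse_map K ` B \<inter> M \<noteq> {}" using E unfolding B_def P_def by blast
    show False using Mconn F1 F2 c1 c2 c3 c4 unfolding connectedin_closedin by blast
  qed
  have Pconn: "connectedin X P"
    unfolding connectedin_closedin
  proof (intro conjI notI)
    show "P \<subseteq> topspace X" by (rule Psub)
    assume "\<exists>E1 E2. closedin X E1 \<and> closedin X E2 \<and> P \<subseteq> E1 \<union> E2 \<and> E1 \<inter> E2 \<inter> P = {} \<and>
       E1 \<inter> P \<noteq> {} \<and> E2 \<inter> P \<noteq> {}"
    then obtain E1 E2 where E: "closedin X E1" "closedin X E2" "P \<subseteq> E1 \<union> E2" "E1 \<inter> E2 \<inter> P = {}"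
       "E1 \<inter> P \<noteq> {}" "E2 \<inter> P \<noteq> {}" by blast
    have "K \<inter> E1 = {} \<or> K \<inter> E2 = {}"
      using Kconn E KP unfolding connectedin_closedin by blast
    then show False
    proof
      assume "K \<inter> E2 = {}" then show False using claim E by blast
    next
      assume "K \<inter> E1 = {}" then show False using claim[of E2 E1] E by blast
    qed
  qed
  show ?thesis
    unfolding P_def[symmetric] subcontinuum_def continuum_def
  proof (intro conjI)
    show "P \<subseteq> topspace X" by (rule Psub)
    show "compact_space (subtopology X P)" using Pc compactin_subspace by blast
    show "connected_space (subtopology X P)" using Pconn connectedin_def by blast
    show "Hausdorff_space (subtopology X P)" using HX Hausdorff_space_subtopology by blast
    show "\<exists>a\<in>topspace (subtopology X P). \<exists>b\<in>topspace (subtopology X P). a \<noteq> b"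
      using ab KP Psub by auto
  qed
qed


theorem mainTheorem14:
  fixes X :: "'a topology" and K :: "'a set"
  assumes "continuum X"
    and "subcontinuum X K"
    and "coastal_at (collapse_topology X K) K"
  shows "\<exists>y\<in>topspace X - K. X closure_of (kappa X K y) = topspace X"
proof -
  define Q where "Q = collapse_topology X K"
  define q where "q = collapse_map K"
  have Ksub: "K \<subseteq> topspace X" using assms(2) by (simp add: subcontinuum_def)
  have Kc: "compactin X K" using assms(2) by (simp add: subcontinuum_def continuum_def compactin_subspace)
  have HX: "Hausdorff_space X" using assms(1) by (simp add: continuum_def)
  have Kcl: "closedin X K" using HX Kc compactin_imp_closedin by blast
  obtain p where p: "K \<in> topspace Q" "p \<in> topspace Q" "p \<noteq> K"
      "Q closure_of (kappa Q {K} p) = topspace Q"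
    using assms(3) unfolding coastal_at_def Q_def by blast
  obtain y where y: "y \<in> topspace X" "p = q y"
    using p(2) unfolding Q_def q_def topspace_collapse by blast
  have yK: "y \<notin> K"
  proof
    assume "y \<in> K"
    then have "q y = K" by (simp add: q_def collapse_map_def)
    then show False using y(2) p(3) by simp
  qed
  have sub: "{x \<in> topspace X. q x \<in> M} \<subseteq> kappa X K y"
    if M: "subcontinuum Q M" "K \<in> M" "p \<notin> M" for M
  proof -
    have sc: "subcontinuum X {x \<in> topspace X. q x \<in> M}"
      unfolding q_def by (rule preimage_subcontinuum[OF assms(1) assms(2)]) (use M in \<open>simp_all add: Q_def\<close>)
    have KP: "K \<subseteq> {x \<in> topspace X. q x \<in> M}"
    proof
      fix x assume xK: "x \<in> K"
      then have "q x = K" by (simp add: q_def collapse_map_def)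
      moreover have "x \<in> topspace X" using Ksub xK by blast
      ultimately show "x \<in> {x \<in> topspace X. q x \<in> M}" using M(2) by simp
    qed
    have "q y \<notin> M" using M(3) y(2) by simp
    then have yP: "y \<notin> {x \<in> topspace X. q x \<in> M}" by simp
    have PT: "{x \<in> topspace X. q x \<in> M} \<noteq> topspace X" using y(1) yP by blast
    have "{x \<in> topspace X. q x \<in> M} \<in>
        {N. subcontinuum X N \<and> K \<subseteq> N \<and> N \<noteq> topspace X \<and> y \<notin> N}"
      using sc KP PT yP by (intro CollectI conjI)
    then show ?thesis unfolding kappa_def by (rule Union_upper)
  qed
  have ksub: "kappa X K y \<subseteq> topspace X" unfolding kappa_def subcontinuum_def by (rule Union_least) simp
  have "kappa Q {K} p \<noteq> {}"
  proof
    assume "kappa Q {K} p = {}"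
    then have "topspace Q = {}" using p(4) by simp
    then show False using p(1) by simp
  qed
  then obtain z where "z \<in> kappa Q {K} p" by blast
  then obtain M0 where "M0 \<in> {M. subcontinuum Q M \<and> {K} \<subseteq> M \<and> M \<noteq> topspace Q \<and> p \<notin> M}"
    unfolding kappa_def by (rule UnionE)
  then have M0: "subcontinuum Q M0" "K \<in> M0" "p \<notin> M0" by simp_all
  have "K \<subseteq> {x \<in> topspace X. q x \<in> M0}"
  proof
    fix x assume xK: "x \<in> K"
    then have "q x = K" by (simp add: q_def collapse_map_def)
    moreover have "x \<in> topspace X" using Ksub xK by blast
    ultimately show "x \<in> {x \<in> topspace X. q x \<in> M0}" using M0(2) by simp
  qed
  then have Kk: "K \<subseteq> kappa X K y"
    using sub[OF M0] by (rule subset_trans)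
  have "topspace X \<subseteq> X closure_of (kappa X K y)"
  proof
    fix x assume x: "x \<in> topspace X"
    show "x \<in> X closure_of (kappa X K y)"
    proof (cases "x \<in> K")
      case True
      then have "x \<in> kappa X K y" using Kk by (rule subsetD[rotated])
      then show ?thesis using closure_of_subset[OF ksub] by (rule subsetD[rotated])
    next
      case False
      have cond: "\<forall>T. x \<in> T \<and> openin X T \<longrightarrow> (\<exists>z. z \<in> kappa X K y \<and> z \<in> T)"
      proof (intro allI impI)
        fix T assume T: "x \<in> T \<and> openin X T"
        have T': "openin X (T - K)" using openin_diff[of X T K] T Kcl by blast
        have oq: "openin Q (q ` (T - K))"
          unfolding Q_def q_def by (rule openin_collapse_sat[OF T']) auto
        have qxt: "q x \<in> topspace Q" unfolding Q_def q_def topspace_collapse using x by blast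
        have "q x \<in> Q closure_of (kappa Q {K} p)"
          using p(4) qxt by simp
        then have cl: "\<forall>U. q x \<in> U \<and> openin Q U \<longrightarrow> (\<exists>m\<in>kappa Q {K} p. m \<in> U)"
          unfolding in_closure_of by blast
        have qxT: "q x \<in> q ` (T - K)" using T False by blast
        have "q x \<in> q ` (T - K) \<and> openin Q (q ` (T - K)) \<longrightarrow>
            (\<exists>m\<in>kappa Q {K} p. m \<in> q ` (T - K))"
          using cl by (rule spec)
        then have "\<exists>m\<in>kappa Q {K} p. m \<in> q ` (T - K)"
          using qxT oq by (rule mp[OF _ conjI])
        then obtain m where m: "m \<in> kappa Q {K} p" "m \<in> q ` (T - K)" by blast
        from m(1) obtain M where "M \<in> {M. subcontinuum Q M \<and> {K} \<subseteq> M \<and> M \<noteq> topspace Q \<and> p \<notin> M}"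
            "m \<in> M"
          unfolding kappa_def by (rule UnionE)
        then have M: "subcontinuum Q M" "K \<in> M" "p \<notin> M" "m \<in> M" by simp_all
        from m(2) obtain t where t: "t \<in> T - K" "m = q t" by (rule imageE) simp
        have "t \<in> topspace X" using t T openin_subset by blast
        then have "t \<in> {x \<in> topspace X. q x \<in> M}" using M(4) t by simp
        then have "t \<in> kappa X K y" using sub[OF M(1-3)] by (rule subsetD[rotated])
        then show "\<exists>z. z \<in> kappa X K y \<and> z \<in> T" using t by blast
      qed
      show ?thesis unfolding in_closure_of using x cond by blast
    qed
  qed
  then have "X closure_of (kappa X K y) = topspace X"
    by (intro subset_antisym closure_of_subset_topspace)
  then show ?thesis using y yK by blast
qed

end
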